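(* Let $G$ be a graph and $H$ a subgraph of $G$ with well-connected adhesion sets. Then any rooted subtree of $H$ that is normal in $H$ is also normal in $G$.
   Context: For distinct vertices $v,w$, $\kappa_H(v,w)$ denotes the largest size of a family of pairwise internally disjoint $v$–$w$ paths in $H$. For a subgraph $H \subseteq G$, an $H$-path in $G$ is a path with at least one edge whose endvertices lie in $H$ and whose edges and inner vertices lie outside $H$. $H$ has well-connected adhesion sets (in $G$) if the endvertices of every $H$-path in $G$ have infinite connectivity $\kappa_H$ in $H$. A rooted tree $T$ in a graph $K$ (tree order: $x\le y$ iff $x$ lies on the root–$y$ path in $T$) is normal in $K$ if the endvertices of every $T$-path in $K$ are comparable in the tree order. *)

theory Defs
  imports Main
begin

definition graph :: "'a set \<Rightarrow> 'a set set \<Rightarrow> bool" where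
  "graph V E \<longleftrightarrow> (\<forall>e\<in>E. \<exists>x y. x \<noteq> y \<and> x \<in> V \<and> y \<in> V \<and> e = {x, y})"

definition subgraph :: "'a set \<Rightarrow> 'a set set \<Rightarrow> 'a set \<Rightarrow> 'a set set \<Rightarrow> bool" where
  "subgraph VH EH VG EG \<longleftrightarrow> graph VH EH \<and> VH \<subseteq> VG \<and> EH \<subseteq> EG"

definition is_path :: "'a set \<Rightarrow> 'a set set \<Rightarrow> 'a list \<Rightarrow> bool" where
  "is_path V E p \<longleftrightarrow> p \<noteq> [] \<and> distinct p \<and> set p \<subseteq> V \<and>
     (\<forall>i < length p - 1. {p ! i, p ! Suc i} \<in> E)"

definition path_edges :: "'a list \<Rightarrow> 'a set set" where
  "path_edges p = {{p ! i, p ! Suc i} | i. i < length p - 1}"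

definition inner :: "'a list \<Rightarrow> 'a set" where
  "inner p = set (butlast (tl p))"

definition H_path :: "'a set \<Rightarrow> 'a set set \<Rightarrow> 'a set \<Rightarrow> 'a set set \<Rightarrow> 'a list \<Rightarrow> bool" where
  "H_path VH EH VG EG p \<longleftrightarrow> is_path VG EG p \<and> length p \<ge> 2 \<and>
     hd p \<in> VH \<and> last p \<in> VH \<and> inner p \<inter> VH = {} \<and> path_edges p \<inter> EH = {}"

(* kappa_H(v,w) is infinite: there is an infinite family of pairwise internally
   disjoint v--w paths in H. *)
definition infinitely_connected :: "'a set \<Rightarrow> 'a set set \<Rightarrow> 'a \<Rightarrow> 'a \<Rightarrow> bool" where
  "infinitely_connected V E v w \<longleftrightarrow>
     (\<exists>F. infinite F \<and> (\<forall>p\<in>F. is_path V E p \<and> hd p = v \<and> last p = w) \<and>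
          (\<forall>p\<in>F. \<forall>q\<in>F. p \<noteq> q \<longrightarrow> inner p \<inter> inner q = {}))"

definition well_connected_adhesion :: "'a set \<Rightarrow> 'a set set \<Rightarrow> 'a set \<Rightarrow> 'a set set \<Rightarrow> bool" where
  "well_connected_adhesion VH EH VG EG \<longleftrightarrow>
     (\<forall>p. H_path VH EH VG EG p \<longrightarrow> infinitely_connected VH EH (hd p) (last p))"

definition connected_graph :: "'a set \<Rightarrow> 'a set set \<Rightarrow> bool" where
  "connected_graph V E \<longleftrightarrow> (\<forall>x\<in>V. \<forall>y\<in>V. \<exists>p. is_path V E p \<and> hd p = x \<and> last p = y)"

definition is_cycle :: "'a set \<Rightarrow> 'a set set \<Rightarrow> 'a list \<Rightarrow> bool" where
  "is_cycle V E c \<longleftrightarrow> length c \<ge> 3 \<and> is_path V E c \<and> {last c, hd c} \<in> E"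

definition tree :: "'a set \<Rightarrow> 'a set set \<Rightarrow> bool" where
  "tree V E \<longleftrightarrow> graph V E \<and> V \<noteq> {} \<and> connected_graph V E \<and> \<not> (\<exists>c. is_cycle V E c)"

definition tree_le :: "'a set \<Rightarrow> 'a set set \<Rightarrow> 'a \<Rightarrow> 'a \<Rightarrow> 'a \<Rightarrow> bool" where
  "tree_le VT ET r x y \<longleftrightarrow> (\<exists>p. is_path VT ET p \<and> hd p = r \<and> last p = y \<and> x \<in> set p)"

definition normal_tree :: "'a set \<Rightarrow> 'a set set \<Rightarrow> 'a \<Rightarrow> 'a set \<Rightarrow> 'a set set \<Rightarrow> bool" where
  "normal_tree VT ET r VK EK \<longleftrightarrow>
     tree VT ET \<and> r \<in> VT \<and> subgraph VT ET VK EK \<and>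
     (\<forall>p. H_path VT ET VK EK p \<longrightarrow>
        tree_le VT ET r (hd p) (last p) \<or> tree_le VT ET r (last p) (hd p))"

end

theory Submission
  imports Defs
begin


fun walk :: "'a set \<Rightarrow> 'a set set \<Rightarrow> 'a list \<Rightarrow> bool" where
  "walk V E [] = False"
| "walk V E [x] = (x \<in> V)"
| "walk V E (x # y # xs) = (x \<in> V \<and> {x, y} \<in> E \<and> walk V E (y # xs))"

lemma walk_idx: "walk V E p \<longleftrightarrow> p \<noteq> [] \<and> set p \<subseteq> V \<and> (\<forall>i < length p - 1. {p!i, p!Suc i} \<in> E)"
proof (induction V E p rule: walk.induct)
  case (3 V E x y xs)
  have "(\<forall>i < length (x#y#xs) - 1. {(x#y#xs)!i, (x#y#xs)!Suc i} \<in> E) \<longleftrightarrow>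
        {x,y} \<in> E \<and> (\<forall>i < length (y#xs) - 1. {(y#xs)!i, (y#xs)!Suc i} \<in> E)"
    by (auto simp: less_Suc_eq_0_disj)
  then show ?case using 3 by auto
qed auto

lemma is_path_walk: "is_path V E p \<longleftrightarrow> distinct p \<and> walk V E p"
  by (auto simp: is_path_def walk_idx)

lemma walk_hd: "walk V E (y # ys) \<Longrightarrow> y \<in> V"
  by (cases ys) auto

lemma walk_set: "walk V E p \<Longrightarrow> set p \<subseteq> V"
  by (simp add: walk_idx)

lemma walk_ne: "walk V E p \<Longrightarrow> p \<noteq> []"
  by auto

lemma walk_append: "walk V E (xs @ y # ys) \<longleftrightarrow> walk V E (xs @ [y]) \<and> walk V E (y # ys)"
proof (induction xs)
  case Nil
  then show ?case using walk_hd by auto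
next
  case (Cons a xs)
  then show ?case by (cases xs) auto
qed

lemma walk_rev: "walk V E (rev xs) \<longleftrightarrow> walk V E xs"
proof (induction xs)
  case Nil
  then show ?case by simp
next
  case (Cons a xs)
  show ?case
  proof (cases xs)
    case Nil
    then show ?thesis by simp
  next
    case (Cons b xs')
    have "walk V E (rev (a # xs)) = walk V E (rev xs' @ b # [a])" using Cons by simp
    also have "\<dots> = (walk V E (rev xs) \<and> walk V E [b, a])"
      using Cons walk_append[of V E "rev xs'" b "[a]"] by simp
    also have "\<dots> = (walk V E xs \<and> walk V E [b, a])" using Cons.IH by simp
    also have "\<dots> = walk V E (a # xs)" using Cons walk_hd[of V E b xs'] by (auto simp: insert_commute)
    finally show ?thesis .
  qed
qed

lemma walk_concat:
  assumes "walk V E A" "walk V E B" "last A = hd B"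
  shows "walk V E (A @ tl B) \<and> hd (A @ tl B) = hd A \<and> last (A @ tl B) = last B
         \<and> set (A @ tl B) \<subseteq> set A \<union> set B"
proof -
  have A: "A = butlast A @ [last A]" using walk_ne[OF assms(1)] by simp
  have B: "B = hd B # tl B" using walk_ne[OF assms(2)] by simp
  have "walk V E (butlast A @ last A # tl B)"
    using walk_append[of V E "butlast A" "last A" "tl B"] A B assms by metis
  then have "walk V E (A @ tl B)" using A by (metis append.assoc append_Cons append_Nil)
  moreover have "hd (A @ tl B) = hd A" using walk_ne[OF assms(1)] by simp
  moreover have "last (A @ tl B) = last B" using assms B
    by (metis last.simps last_append list.sel(1))
  moreover have "set (A @ tl B) \<subseteq> set A \<union> set B" by (cases B) auto
  ultimately show ?thesis by blast
qed

lemma walk_to_path: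
  "walk V E w \<Longrightarrow> \<exists>p. walk V E p \<and> distinct p \<and> hd p = hd w \<and> last p = last w \<and> set p \<subseteq> set w"
proof (induction "length w" arbitrary: w rule: less_induct)
  case less
  show ?case
  proof (cases "distinct w")
    case True
    then show ?thesis using less.prems by blast
  next
    case False
    then obtain xs ys zs y where w: "w = xs @ [y] @ ys @ [y] @ zs"
      using not_distinct_decomp by blast
    have w0: "walk V E (xs @ y # (ys @ y # zs))" using less.prems w by simp
    have a1: "walk V E (xs @ [y])" and a2: "walk V E (y # ys @ y # zs)"
      using w0 unfolding walk_append[of V E xs y "ys @ y # zs"] by blast+
    have "walk V E ((y # ys) @ y # zs)" using a2 by simp
    then have a3: "walk V E (y # zs)" unfolding walk_append[of V E "y # ys" y zs] by blast
    have wk: "walk V E (xs @ y # zs)" unfolding walk_append[of V E xs y zs] using a1 a3 by blast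
    have "length (xs @ y # zs) < length w" using w by simp
    then obtain p where pp: "walk V E p \<and> distinct p \<and> hd p = hd (xs @ y # zs) \<and>
         last p = last (xs @ y # zs) \<and> set p \<subseteq> set (xs @ y # zs)"
      using less.hyps wk by blast
    moreover have "hd (xs @ y # zs) = hd w" using w by (cases xs) auto
    moreover have "last (xs @ y # zs) = last w" using w by (cases zs) auto
    moreover have "set (xs @ y # zs) \<subseteq> set w" using w by auto
    ultimately show ?thesis by (intro exI[of _ p]) (use pp in auto)
  qed
qed

lemma set_inner: "p \<noteq> [] \<Longrightarrow> set p \<subseteq> {hd p, last p} \<union> inner p"
proof (cases p)
  case (Cons a t)
  then show ?thesis
  proof (cases t rule: rev_exhaust)
    case (snoc b c)
    then show ?thesis using Cons by (auto simp: inner_def)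
  qed simp
qed simp

lemma inner_distinct:
  assumes "distinct p" "length p \<ge> 2"
  shows "inner p \<inter> {hd p, last p} = {}"
proof (cases p)
  case (Cons a t)
  then show ?thesis
  proof (cases t rule: rev_exhaust)
    case (snoc b c)
    then show ?thesis using Cons assms(1) by (auto simp: inner_def)
  qed (use assms in simp)
qed (use assms in simp)

lemma inner_seg: "inner (x # u @ [z]) = set u"
  by (simp add: inner_def)

lemma path_edges_seg:
  assumes "u \<noteq> []" "e \<in> path_edges (x # u @ [z])"
  shows "e \<inter> set u \<noteq> {}"
proof -
  let ?l = "x # u @ [z]"
  obtain i where i: "i < length ?l - 1" "e = {?l!i, ?l!Suc i}"
    using assms(2) by (auto simp: path_edges_def)
  show ?thesis
  proof (cases i)
    case 0
    then have "?l ! Suc i = u ! 0" using assms(1) by (simp add: nth_append)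
    then show ?thesis using i assms(1) by auto
  next
    case (Suc j)
    then have "j < length u" using i by simp
    then have "?l ! i = u ! j" using Suc by (simp add: nth_append)
    then show ?thesis using i \<open>j < length u\<close> by auto
  qed
qed

lemma path_edges_single: "e \<in> path_edges [x, z] \<Longrightarrow> e = {x, z}"
  by (auto simp: path_edges_def)

lemma pick_avoiding:
  assumes "infinite F" "\<forall>p\<in>F. \<forall>q\<in>F. p \<noteq> q \<longrightarrow> inner p \<inter> inner q = {}" "finite S"
  shows "\<exists>q\<in>F. inner q \<inter> S = {}"
proof (rule ccontr)
  assume "\<not> ?thesis"
  then have ne: "\<forall>q\<in>F. inner q \<inter> S \<noteq> {}" by blast
  define f where "f q = (SOME s. s \<in> inner q \<inter> S)" for q
  have fin: "\<forall>q\<in>F. f q \<in> inner q \<inter> S" 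
  proof
    fix q assume "q \<in> F"
    then have "inner q \<inter> S \<noteq> {}" using ne by blast
    then show "f q \<in> inner q \<inter> S" unfolding f_def some_in_eq .
  qed
  have "inj_on f F"
  proof (rule inj_onI)
    fix p q assume "p \<in> F" "q \<in> F" "f p = f q"
    show "p = q"
    proof (rule ccontr)
      assume "p \<noteq> q"
      then have "inner p \<inter> inner q = {}" using assms(2) \<open>p \<in> F\<close> \<open>q \<in> F\<close> by blast
      moreover have "f p \<in> inner p" "f q \<in> inner q" using fin \<open>p \<in> F\<close> \<open>q \<in> F\<close> by auto
      ultimately show False using \<open>f p = f q\<close> by auto
    qed
  qed
  moreover have "f ` F \<subseteq> S" using fin by blast
  ultimately have "finite F" using assms(3) finite_imageD finite_subset by metis
  then show False using assms(1) by simp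
qed



lemma walk_tl: "walk V E (a # p) \<Longrightarrow> p \<noteq> [] \<Longrightarrow> walk V E p"
  by (cases p) auto

lemma path_unique:
  assumes nc: "\<not> (\<exists>c. is_cycle V E c)"
  shows "walk V E p \<Longrightarrow> distinct p \<Longrightarrow> walk V E q \<Longrightarrow> distinct q \<Longrightarrow> hd p = hd q
         \<Longrightarrow> last p = last q \<Longrightarrow> p = q"
proof (induction p arbitrary: q)
  case Nil
  then show ?case by simp
next
  case (Cons a p')
  obtain q' where q: "q = a # q'" using Cons.prems walk_ne by (cases q) auto
  show ?case
  proof (cases "p' = []")
    case True
    then have "last q = a" using Cons.prems by simp
    have "q' = []"
    proof (rule ccontr)
      assume qn: "q' \<noteq> []"
      then have "last q' = a" using \<open>last q = a\<close> q by simp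
      then have "a \<in> set q'" using qn last_in_set by metis
      then show False using Cons.prems(4) q by simp
    qed
    then show ?thesis using q True by simp
  next
    case pne: False
    show ?thesis
    proof (cases "q' = []")
      case True
      then have "last (a # p') = a" using Cons.prems q by simp
      then have "last p' = a" using pne by simp
      then have "a \<in> set p'" using pne last_in_set by metis
      moreover have "a \<notin> set p'" using Cons.prems(2) by simp
      ultimately show ?thesis by blast
    next
      case qne: False
      have wp: "walk V E p'" using walk_tl[OF Cons.prems(1) pne] .
      have wq: "walk V E q'" using walk_tl[of V E a q'] Cons.prems(3) q qne by simp
      show ?thesis
      proof (cases "hd p' = hd q'")
        case True
        have "p' = q'" using Cons.IH[OF wp _ wq] Cons.prems q pne qne True by simp
        then show ?thesis using q by simp
      next
        case False
        have "last p' \<in> set q'" using Cons.prems(6) q pne qne by simp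
        then have "\<exists>x\<in>set p'. x \<in> set q'" using pne by auto
        then obtain u z v where p': "p' = u @ z # v" and zq: "z \<in> set q'" and
          uq: "\<forall>y\<in>set u. y \<notin> set q'"
          using split_list_first_prop[of p' "\<lambda>x. x \<in> set q'"] by blast
        obtain s t where q': "q' = s @ z # t" using zq split_list by metis
        define c where "c = a # u @ z # rev s"
        have w1: "walk V E ((a # u) @ [z])"
          using Cons.prems(1) p' walk_append[of V E "a # u" z v] by simp
        have "walk V E (s @ [z])" using wq q' walk_append[of V E s z t] by simp
        then have w2: "walk V E (z # rev s)" using walk_rev[of V E "s @ [z]"] by simp
        have wc: "walk V E c" unfolding c_def
          using w1 w2 walk_append[of V E "a # u" z "rev s"] by simp
        have dc: "distinct c"
        proof -
          have a1: "a \<notin> set p'" "distinct p'" using Cons.prems(2) by auto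
          have a2: "a \<notin> set q'" "distinct q'" using Cons.prems(4) q by auto
          have b1: "a \<notin> set u" "a \<noteq> z" "distinct u" "z \<notin> set u" using a1 p' by auto
          have b2: "a \<notin> set s" "distinct s" "z \<notin> set s" using a2 q' by auto
          have b3: "set u \<inter> set s = {}" using uq q' by auto
          show ?thesis unfolding c_def using b1 b2 b3 by auto
        qed
        have lc: "length c \<ge> 3"
        proof (rule ccontr)
          assume "\<not> ?thesis"
          moreover have "length c = length u + length s + 2" unfolding c_def by simp
          ultimately have "length u + length s = 0" by linarith
          then have "u = [] \<and> s = []" by simp
          then show False using False p' q' by simp
        qed
        have "last c = hd q'" unfolding c_def using q' by (cases s) auto
        moreover have "{a, hd q'} \<in> E" using Cons.prems(3) q qne by (cases q') auto
        ultimately have "{last c, hd c} \<in> E" unfolding c_def by (simp add: insert_commute)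
        then have "is_cycle V E c" using wc dc lc by (simp add: is_cycle_def is_path_walk)
        then show ?thesis using nc by blast
      qed
    qed
  qed
qed

lemma tle_alt: "tree_le V E r x y \<longleftrightarrow> (\<exists>p. walk V E p \<and> distinct p \<and> hd p = r \<and> last p = y \<and> x \<in> set p)"
  by (auto simp: tree_le_def is_path_walk)

lemma tle_V: "tree_le V E r x y \<Longrightarrow> x \<in> V \<and> y \<in> V"
  unfolding tle_alt by (metis walk_set walk_ne last_in_set subsetD)

lemma tle_refl: "tree V E \<Longrightarrow> r \<in> V \<Longrightarrow> x \<in> V \<Longrightarrow> tree_le V E r x x"
  unfolding tree_def connected_graph_def tree_le_def
  by (metis is_path_def last_in_set)

lemma tle_prefix:
  assumes "walk V E (u @ y # v)" "distinct (u @ y # v)" "hd (u @ y # v) = r" "x \<in> set (u @ [y])"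
  shows "tree_le V E r x y"
  unfolding tle_alt
proof (intro exI conjI)
  show "walk V E (u @ [y])" using assms(1) walk_append[of V E u y v] by simp
  show "distinct (u @ [y])" using assms(2) by simp
  show "hd (u @ [y]) = r" using assms(3) by (cases u) simp_all
  show "last (u @ [y]) = y" by simp
  show "x \<in> set (u @ [y])" using assms(4) .
qed

lemma tle_on_path:
  assumes "tree V E" "walk V E p" "distinct p" "hd p = r" "last p = y" "tree_le V E r x y"
  shows "x \<in> set p"
proof -
  obtain q where q: "walk V E q" "distinct q" "hd q = r" "last q = y" "x \<in> set q"
    using assms(6) unfolding tle_alt by blast
  have nc: "\<not> (\<exists>c. is_cycle V E c)" using assms(1) by (simp add: tree_def)
  have "hd q = hd p" "last q = last p" using q assms by simp_all
  then have "q = p" using path_unique[OF nc q(1) q(2) assms(2) assms(3)] by blast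
  then show ?thesis using q by simp
qed

lemma tle_trans:
  assumes "tree V E" "tree_le V E r x y" "tree_le V E r y z"
  shows "tree_le V E r x z"
proof -
  obtain p where p: "walk V E p" "distinct p" "hd p = r" "last p = z" "y \<in> set p"
    using assms(3) unfolding tle_alt by blast
  obtain u v where uv: "p = u @ y # v" using p(5) split_list by metis
  have "walk V E (u @ [y])" using p(1) uv walk_append[of V E u y v] by simp
  moreover have "distinct (u @ [y])" using p uv by simp
  moreover have "hd (u @ [y]) = r" using p uv by (cases u) simp_all
  moreover have "last (u @ [y]) = y" by simp
  ultimately have "x \<in> set (u @ [y])" using tle_on_path[OF assms(1) _ _ _ _ assms(2)] by blast
  then have "x \<in> set p" using uv by auto
  then show ?thesis unfolding tle_alt using p by blast
qed

lemma tle_chain: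
  assumes "tree V E" "tree_le V E r a c" "tree_le V E r b c"
  shows "tree_le V E r a b \<or> tree_le V E r b a"
proof -
  obtain p where p: "walk V E p" "distinct p" "hd p = r" "last p = c" "a \<in> set p"
    using assms(2) unfolding tle_alt by blast
  have bp: "b \<in> set p" using tle_on_path[OF assms(1) p(1-4) assms(3)] .
  obtain u v where uv: "p = u @ a # v" using p(5) split_list by metis
  show ?thesis
  proof (cases "b \<in> set (u @ [a])")
    case True
    then show ?thesis using tle_prefix[of V E u a v r b] p uv by simp
  next
    case False
    then have "b \<in> set v" using bp uv by auto
    then obtain v1 v2 where "v = v1 @ b # v2" using split_list by metis
    then have "p = (u @ a # v1) @ b # v2" using uv by simp
    then have "tree_le V E r a b" using tle_prefix[of V E "u @ a # v1" b v2 r a] p by simp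
    then show ?thesis by simp
  qed
qed

lemma tle_edge:
  assumes "tree V E" "r \<in> V" "{x, y} \<in> E" "x \<in> V" "y \<in> V"
  shows "tree_le V E r x y \<or> tree_le V E r y x"
proof -
  obtain p where p: "walk V E p" "distinct p" "hd p = r" "last p = x"
    using assms unfolding tree_def connected_graph_def by (metis is_path_walk)
  show ?thesis
  proof (cases "y \<in> set p")
    case True
    then show ?thesis using p unfolding tle_alt by blast
  next
    case False
    have pe: "p = butlast p @ [x]" using p walk_ne by fastforce
    have "walk V E (butlast p @ x # [y])"
      using walk_append[of V E "butlast p" x "[y]"] pe p assms by simp
    then have "walk V E (p @ [y])" using pe by (metis append.assoc append_Cons append_Nil)
    moreover have "distinct (p @ [y])" using p False by simp
    moreover have "hd (p @ [y]) = r" using p walk_ne by fastforce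
    moreover have "x \<in> set (p @ [y])" using pe by (metis in_set_conv_decomp append.assoc append_Cons)
    ultimately show ?thesis unfolding tle_alt by fastforce
  qed
qed

lemma tle_finite:
  assumes "tree V E" "r \<in> V" "t \<in> V"
  shows "finite {v. tree_le V E r v t}"
proof -
  obtain p where p: "walk V E p" "distinct p" "hd p = r" "last p = t"
    using assms unfolding tree_def connected_graph_def by (metis is_path_walk)
  have "{v. tree_le V E r v t} \<subseteq> set p" using tle_on_path[OF assms(1) p] by blast
  then show ?thesis using finite_subset by blast
qed



lemma seg_compare:
  assumes nt: "normal_tree VT ET r VH EH"
    and w: "walk VH EH (x # u @ [z])" and xz: "x \<in> VT" "z \<in> VT" and uT: "set u \<inter> VT = {}"
  shows "tree_le VT ET r x z \<or> tree_le VT ET r z x"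
proof -
  have tr: "tree VT ET" and rT: "r \<in> VT" and gT: "graph VT ET"
    using nt by (auto simp: normal_tree_def subgraph_def)
  show ?thesis
  proof (cases "x = z")
    case True
    then show ?thesis using tle_refl[OF tr rT xz(1)] by simp
  next
    case xnz: False
    obtain p where p: "walk VH EH p" "distinct p" "hd p = x" "last p = z" "set p \<subseteq> set (x # u @ [z])"
      using walk_to_path[OF w] by auto
    have pne: "p \<noteq> []" using p walk_ne by blast
    have len: "length p \<ge> 2"
    proof (cases p)
      case Nil then show ?thesis using pne by simp
    next
      case (Cons a t)
      show ?thesis
      proof (cases t)
        case Nil
        then show ?thesis using Cons p xnz by simp
      next
        case (Cons b t')
        then show ?thesis using \<open>p = a # t\<close> by simp
      qed
    qed
    have inT: "inner p \<inter> VT = {}"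
    proof -
      have "inner p \<subseteq> set p" unfolding inner_def by (cases p) (auto dest: in_set_butlastD)
      then have "inner p \<subseteq> set u" using inner_distinct[OF p(2) len] p by auto
      then show ?thesis using uT by blast
    qed
    show ?thesis
    proof (cases "path_edges p \<inter> ET = {}")
      case True
      have "H_path VT ET VH EH p"
        unfolding H_path_def using True p len inT xz by (simp add: is_path_walk)
      then show ?thesis using nt p unfolding normal_tree_def by auto
    next
      case False
      then obtain i where i: "i < length p - 1" "{p!i, p!Suc i} \<in> ET"
        by (auto simp: path_edges_def)
      obtain a b where ab: "a \<in> VT" "b \<in> VT" "{p!i, p!Suc i} = {a, b}"
        using gT i(2) unfolding graph_def by blast
      have "p!i \<in> VT" "p!Suc i \<in> VT" using ab by (metis insertCI insert_absorb2 insert_iff singletonD)+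
      moreover have "p!i \<in> set p" "p!Suc i \<in> set p" using i(1) by auto
      ultimately have "p!i \<in> {x,z}" "p!Suc i \<in> {x,z}" using p(5) uT by auto
      moreover have "p!i \<noteq> p!Suc i" using p(2) i(1) by (simp add: nth_eq_iff_index_eq)
      ultimately have "{p!i, p!Suc i} = {x, z}" by auto
      then have "{x, z} \<in> ET" using i(2) by simp
      then show ?thesis using tle_edge[OF tr rT _ xz] by simp
    qed
  qed
qed

lemma walk_meet:
  assumes nt: "normal_tree VT ET r VH EH"
  shows "walk VH EH w \<Longrightarrow> hd w \<in> VT \<Longrightarrow> last w \<in> VT \<Longrightarrow>
    \<exists>m\<in>set w. tree_le VT ET r m (hd w) \<and> tree_le VT ET r m (last w)"
proof (induction "length w" arbitrary: w rule: less_induct)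
  case less
  have tr: "tree VT ET" and rT: "r \<in> VT"
    using nt by (auto simp: normal_tree_def)
  obtain x rest where w: "w = x # rest" using less.prems walk_ne by (cases w) auto
  show ?case
  proof (cases "rest = []")
    case True
    then show ?thesis using w less.prems tle_refl[OF tr rT] by auto
  next
    case False
    then have "last rest \<in> VT" "last rest \<in> set rest" using less.prems w by auto
    then obtain u z v where rest: "rest = u @ z # v" and zT: "z \<in> VT" and uT: "\<forall>y\<in>set u. y \<notin> VT"
      using split_list_first_prop[of rest "\<lambda>y. y \<in> VT"] by blast
    have wsplit: "w = (x # u) @ z # v" using w rest by simp
    have w1: "walk VH EH (x # u @ [z])" and w2: "walk VH EH (z # v)"
      using less.prems(1) wsplit walk_append[of VH EH "x # u" z v] by auto
    have "length (z # v) < length w" using wsplit by simp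
    moreover have "last (z # v) = last w" using wsplit by simp
    ultimately obtain m' where m': "m' \<in> set (z # v)" "tree_le VT ET r m' z" "tree_le VT ET r m' (last w)"
      using less.hyps[of "z # v"] w2 zT less.prems(3) by auto
    have m'w: "m' \<in> set w" using m'(1) wsplit by auto
    have xT: "x \<in> VT" using less.prems w by simp
    have cmp: "tree_le VT ET r x z \<or> tree_le VT ET r z x"
      using seg_compare[OF nt w1 xT zT] uT by blast
    show ?thesis
    proof (cases "tree_le VT ET r x z")
      case True
      then have "tree_le VT ET r m' x \<or> tree_le VT ET r x m'" using tle_chain[OF tr m'(2)] by blast
      then show ?thesis
      proof
        assume "tree_le VT ET r m' x"
        then show ?thesis using m'w m' w by auto
      next
        assume "tree_le VT ET r x m'"
        then have "tree_le VT ET r x (last w)" using tle_trans[OF tr _ m'(3)] by blast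
        then show ?thesis using w tle_refl[OF tr rT xT] by auto
      qed
    next
      case False
      then have "tree_le VT ET r z x" using cmp by blast
      then have "tree_le VT ET r m' x" using tle_trans[OF tr m'(2)] by blast
      then show ?thesis using m'w m' w by auto
    qed
  qed
qed

lemma reroute:
  assumes gH: "graph VH EH" and wc: "well_connected_adhesion VH EH VG EG" and fS: "finite S"
  shows "walk VG EG p \<Longrightarrow> distinct p \<Longrightarrow> hd p \<in> VH \<Longrightarrow> last p \<in> VH \<Longrightarrow> set p \<inter> S = {} \<Longrightarrow>
    \<exists>w. walk VH EH w \<and> hd w = hd p \<and> last w = last p \<and> set w \<inter> S = {}"
proof (induction "length p" arbitrary: p rule: less_induct)
  case less
  obtain x rest where p: "p = x # rest" using less.prems walk_ne by (cases p) auto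
  show ?case
  proof (cases "rest = []")
    case True
    then show ?thesis using p less.prems by (intro exI[of _ "[x]"]) auto
  next
    case False
    then have "last rest \<in> VH" "last rest \<in> set rest" using less.prems p by auto
    then obtain u z v where rest: "rest = u @ z # v" and zH: "z \<in> VH" and uH: "\<forall>y\<in>set u. y \<notin> VH"
      using split_list_first_prop[of rest "\<lambda>y. y \<in> VH"] by blast
    have psplit: "p = (x # u) @ z # v" using p rest by simp
    have w1: "walk VG EG (x # u @ [z])" and w2: "walk VG EG (z # v)"
      using less.prems(1) psplit walk_append[of VG EG "x # u" z v] by auto
    have d1: "distinct (x # u @ [z])" and d2: "distinct (z # v)" using less.prems(2) psplit by auto
    have "length (z # v) < length p" using psplit by simp
    moreover have "last (z # v) = last p" using psplit by simp
    moreover have "set (z # v) \<inter> S = {}" using less.prems(5) psplit by auto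
    moreover have "last (z # v) \<in> VH" using less.prems(4) psplit by simp
    ultimately have "\<exists>w. walk VH EH w \<and> hd w = hd (z # v) \<and> last w = last (z # v) \<and> set w \<inter> S = {}"
      using less.hyps[of "z # v"] w2 d2 zH by simp
    then obtain w' where w': "walk VH EH w'" "hd w' = z" "last w' = last p" "set w' \<inter> S = {}"
      using \<open>last (z # v) = last p\<close> by auto
    have xH: "x \<in> VH" using less.prems p by simp
    have xS: "x \<notin> S" and zS: "z \<notin> S" using less.prems(5) psplit by auto
    obtain q where q: "walk VH EH q" "hd q = x" "last q = z" "set q \<inter> S = {}"
    proof (cases "u = [] \<and> {x, z} \<in> EH")
      case True
      then have "walk VH EH [x, z]" using xH zH by simp
      then show ?thesis using that[of "[x, z]"] True xS zS by auto
    next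
      case nE: False
      have "path_edges (x # u @ [z]) \<inter> EH = {}"
      proof (rule ccontr)
        assume "\<not> ?thesis"
        then obtain e where e: "e \<in> path_edges (x # u @ [z])" "e \<in> EH" by blast
        show False
        proof (cases "u = []")
          case True
          then have "e = {x, z}" using e path_edges_single by fastforce
          then show False using nE True e by simp
        next
          case False
          then obtain y where "y \<in> e" "y \<in> set u" using path_edges_seg[OF False e(1)] by blast
          moreover obtain a b where "e = {a, b}" "a \<in> VH" "b \<in> VH"
            using gH e(2) unfolding graph_def by blast
          then have "e \<subseteq> VH" by simp
          ultimately show False using uH by blast
        qed
      qed
      moreover have "is_path VG EG (x # u @ [z])" using w1 d1 by (simp add: is_path_walk)
      moreover have "inner (x # u @ [z]) \<inter> VH = {}" unfolding inner_seg using uH by blast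
      ultimately have hp: "H_path VH EH VG EG (x # u @ [z])"
        unfolding H_path_def using xH zH by simp
      have "infinitely_connected VH EH (hd (x # u @ [z])) (last (x # u @ [z]))"
        using wc hp unfolding well_connected_adhesion_def by blast
      then have "infinitely_connected VH EH x z" by simp
      then obtain F where F: "infinite F" "\<forall>p\<in>F. is_path VH EH p \<and> hd p = x \<and> last p = z"
        "\<forall>p\<in>F. \<forall>q\<in>F. p \<noteq> q \<longrightarrow> inner p \<inter> inner q = {}"
        unfolding infinitely_connected_def by blast
      obtain q where "q \<in> F" "inner q \<inter> S = {}" using pick_avoiding[OF F(1) F(3) fS] by blast
      then have qq: "walk VH EH q" "hd q = x" "last q = z" "inner q \<inter> S = {}"
        using F(2) by (auto simp: is_path_walk)
      have "set q \<subseteq> {x, z} \<union> inner q" using set_inner[OF walk_ne[OF qq(1)]] qq by simp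
      then have "set q \<inter> S = {}" using qq(4) xS zS by blast
      then show ?thesis using that qq by blast
    qed
    have c: "walk VH EH (q @ tl w') \<and> hd (q @ tl w') = hd q \<and> last (q @ tl w') = last w'
         \<and> set (q @ tl w') \<subseteq> set q \<union> set w'"
      using walk_concat[OF q(1) w'(1)] q w' by simp
    show ?thesis
      by (rule exI[of _ "q @ tl w'"]) (use c q w' p in auto)
  qed
qed



theorem lemma3p1:
  fixes VG VH VT :: "'a set" and EG EH ET :: "'a set set" and r :: 'a
  assumes "graph VG EG"
    and "subgraph VH EH VG EG"
    and "well_connected_adhesion VH EH VG EG"
    and "subgraph VT ET VH EH" and "tree VT ET" and "r \<in> VT"
    and "normal_tree VT ET r VH EH"
  shows "normal_tree VT ET r VG EG"
proof -
  have gH: "graph VH EH" and VHG: "VH \<subseteq> VG" "EH \<subseteq> EG" using assms(2) by (auto simp: subgraph_def)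
  have gT: "graph VT ET" and VTH: "VT \<subseteq> VH" "ET \<subseteq> EH" using assms(4) by (auto simp: subgraph_def)
  have sub: "subgraph VT ET VG EG" unfolding subgraph_def using gT VHG VTH by blast
  have main: "tree_le VT ET r (hd p) (last p) \<or> tree_le VT ET r (last p) (hd p)"
    if hp: "H_path VT ET VG EG p" for p
  proof (rule ccontr)
    assume nc: "\<not> ?thesis"
    define t1 where "t1 = hd p"
    define t2 where "t2 = last p"
    have pw: "walk VG EG p" "distinct p" using hp by (auto simp: H_path_def is_path_walk)
    have t1T: "t1 \<in> VT" and t2T: "t2 \<in> VT" using hp by (auto simp: H_path_def t1_def t2_def)
    have inT: "inner p \<inter> VT = {}" using hp by (simp add: H_path_def)
    define S where "S = {v. tree_le VT ET r v t1 \<and> tree_le VT ET r v t2}"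
    have fS: "finite S"
    proof -
      have "S \<subseteq> {v. tree_le VT ET r v t1}" unfolding S_def by blast
      then show ?thesis using tle_finite[OF assms(5) assms(6) t1T] finite_subset by blast
    qed
    have ST: "S \<subseteq> VT" unfolding S_def using tle_V by fastforce
    have t1S: "t1 \<notin> S" and t2S: "t2 \<notin> S" using nc unfolding S_def t1_def t2_def by auto
    have pS: "set p \<inter> S = {}"
    proof -
      have "set p \<subseteq> {t1, t2} \<union> inner p" unfolding t1_def t2_def using set_inner walk_ne[OF pw(1)] by blast
      then show ?thesis using t1S t2S inT ST by blast
    qed
    obtain w where w: "walk VH EH w" "hd w = t1" "last w = t2" "set w \<inter> S = {}"
      using reroute[OF gH assms(3) fS pw] t1T t2T VTH pS unfolding t1_def t2_def by blast
    obtain m where "m \<in> set w" "tree_le VT ET r m t1" "tree_le VT ET r m t2"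
      using walk_meet[OF assms(7) w(1)] w t1T t2T by auto
    then show False using w(4) unfolding S_def by blast
  qed
  show ?thesis unfolding normal_tree_def using assms(5,6) sub main by blast
qed

end
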